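(* Let $\mathcal{A}$ be a central, essential arrangement of hyperplanes in $\mathbb{R}^d$ and fix a chamber $c_0$. Then for chambers $c$, the set $L_1(c_0,c)$ determines $c$ uniquely. Moreover, fixing a minimal gallery $r_0$ from $c_0$ to $-c_0$, for minimal galleries $r$ from $c_0$ to $-c_0$ the set $L_2(r_0,r)$ determines $r$ uniquely.
   Context: A central, essential arrangement is a finite set of linear hyperplanes in $\mathbb{R}^d$ with common intersection $\{0\}$. Chambers are connected components of the complement of the union of the hyperplanes. $L_1(c,c')$ is the set of hyperplanes separating chambers $c,c'$. A minimal gallery from $c$ to $c'$ is a shortest path in the graph on chambers where $c,c'$ are adjacent iff $|L_1(c,c')|=1$; a minimal gallery from $c_0$ to $-c_0$ crosses every hyperplane exactly once. $L_2$ is the set of codimension-two subspaces arising as intersections of hyperplanes of $\mathcal{A}$. For minimal galleries $r,r'$ from $c_0$ to $-c_0$, $L_2(r,r')$ is the set of $X\in L_2$ such that $r$ and $r'$ cross the hyperplanes containing $X$ in different orders. *)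

theory Defs
  imports "HOL-Analysis.Analysis"
begin

definition linear_hyperplane :: "'a::euclidean_space set \<Rightarrow> bool" where
  "linear_hyperplane H \<longleftrightarrow> (\<exists>a. a \<noteq> 0 \<and> H = {x. a \<bullet> x = 0})"

definition central_essential_arrangement :: "'a::euclidean_space set set \<Rightarrow> bool" where
  "central_essential_arrangement A \<longleftrightarrow>
     finite A \<and> (\<forall>H\<in>A. linear_hyperplane H) \<and> \<Inter>A = {0}"

definition chambers :: "'a::euclidean_space set set \<Rightarrow> 'a set set" where
  "chambers A = components (- \<Union>A)"

definition separates :: "'a::euclidean_space set \<Rightarrow> 'a set \<Rightarrow> 'a set \<Rightarrow> bool" where
  "separates H c c' \<longleftrightarrow> (\<forall>x\<in>c. \<forall>y\<in>c'. \<not> connected_component (- H) x y)"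

definition L1 :: "'a::euclidean_space set set \<Rightarrow> 'a set \<Rightarrow> 'a set \<Rightarrow> 'a set set" where
  "L1 A c c' = {H \<in> A. separates H c c'}"

definition gallery :: "'a::euclidean_space set set \<Rightarrow> 'a set list \<Rightarrow> bool" where
  "gallery A g \<longleftrightarrow> g \<noteq> [] \<and> set g \<subseteq> chambers A \<and>
     (\<forall>i. Suc i < length g \<longrightarrow> card (L1 A (g ! i) (g ! Suc i)) = 1)"

definition gallery_from_to :: "'a::euclidean_space set set \<Rightarrow> 'a set \<Rightarrow> 'a set \<Rightarrow> 'a set list \<Rightarrow> bool" where
  "gallery_from_to A c c' g \<longleftrightarrow> gallery A g \<and> hd g = c \<and> last g = c'"

definition minimal_gallery :: "'a::euclidean_space set set \<Rightarrow> 'a set \<Rightarrow> 'a set \<Rightarrow> 'a set list \<Rightarrow> bool" where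
  "minimal_gallery A c c' g \<longleftrightarrow> gallery_from_to A c c' g \<and>
     (\<forall>g'. gallery_from_to A c c' g' \<longrightarrow> length g \<le> length g')"

definition L2 :: "'a::euclidean_space set set \<Rightarrow> 'a set set" where
  "L2 A = {X. (\<exists>S. S \<subseteq> A \<and> S \<noteq> {} \<and> X = \<Inter>S) \<and> dim X + 2 = DIM('a)}"

definition crosses_at :: "'a::euclidean_space set set \<Rightarrow> 'a set list \<Rightarrow> 'a set \<Rightarrow> nat \<Rightarrow> bool" where
  "crosses_at A r H i \<longleftrightarrow> Suc i < length r \<and> H \<in> L1 A (r ! i) (r ! Suc i)"

definition crosses_before :: "'a::euclidean_space set set \<Rightarrow> 'a set list \<Rightarrow> 'a set \<Rightarrow> 'a set \<Rightarrow> bool" where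
  "crosses_before A r H H' \<longleftrightarrow> (\<exists>i j. i < j \<and> crosses_at A r H i \<and> crosses_at A r H' j)"

definition L2_diff :: "'a::euclidean_space set set \<Rightarrow> 'a set list \<Rightarrow> 'a set list \<Rightarrow> 'a set set" where
  "L2_diff A r r' = {X \<in> L2 A. \<exists>H\<in>A. \<exists>H'\<in>A. X \<subseteq> H \<and> X \<subseteq> H' \<and>
      crosses_before A r H H' \<and> crosses_before A r' H' H}"

end

theory Submission
  imports Defs
begin

lemma hyp_cc:
  fixes a :: "'a::euclidean_space"
  assumes "a \<noteq> 0" "a \<bullet> x \<noteq> 0" "a \<bullet> y \<noteq> 0"
  shows "connected_component (- {z. a \<bullet> z = 0}) x y \<longleftrightarrow> ((a \<bullet> x > 0) = (a \<bullet> y > 0))"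
proof
  assume "connected_component (- {z. a \<bullet> z = 0}) x y"
  then obtain T where T: "connected T" "T \<subseteq> - {z. a \<bullet> z = 0}" "x \<in> T" "y \<in> T"
    by (auto simp: connected_component_def)
  show "(a \<bullet> x > 0) = (a \<bullet> y > 0)"
  proof (rule ccontr)
    assume "(a \<bullet> x > 0) \<noteq> (a \<bullet> y > 0)"
    then have "(a \<bullet> x \<le> 0 \<and> 0 \<le> a \<bullet> y) \<or> (a \<bullet> y \<le> 0 \<and> 0 \<le> a \<bullet> x)" by auto
    then obtain z where "z \<in> T" "a \<bullet> z = 0"
      using connected_ivt_hyperplane[OF T(1) T(3) T(4)] connected_ivt_hyperplane[OF T(1) T(4) T(3)] by blast
    with T(2) show False by auto
  qed
next
  assume s: "(a \<bullet> x > 0) = (a \<bullet> y > 0)"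
  show "connected_component (- {z. a \<bullet> z = 0}) x y"
  proof (cases "a \<bullet> x > 0")
    case True
    show ?thesis
      by (rule connected_componentI[of "{z. a \<bullet> z > 0}"]) 
         (use True s in \<open>auto intro!: convex_connected convex_halfspace_gt\<close>)
  next
    case False
    show ?thesis
      by (rule connected_componentI[of "{z. a \<bullet> z < 0}"]) 
         (use False s assms in \<open>auto intro!: convex_connected convex_halfspace_lt\<close>)
  qed
qed

locale arr =
  fixes A :: "'a::euclidean_space set set"
  assumes finA: "finite A" and hypA: "\<And>H. H \<in> A \<Longrightarrow> linear_hyperplane H"
begin

definition nrm :: "'a set \<Rightarrow> 'a" where
  "nrm H = (SOME a. a \<noteq> 0 \<and> H = {x. a \<bullet> x = 0})"

lemma nrm: assumes "H \<in> A" shows "nrm H \<noteq> 0" "H = {x. nrm H \<bullet> x = 0}"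
proof -
  have "\<exists>a. a \<noteq> 0 \<and> H = {x. a \<bullet> x = 0}" using hypA[OF assms] by (simp add: linear_hyperplane_def)
  then have "nrm H \<noteq> 0 \<and> H = {x. nrm H \<bullet> x = 0}" unfolding nrm_def by (rule someI_ex)
  then show "nrm H \<noteq> 0" "H = {x. nrm H \<bullet> x = 0}" by auto
qed

lemma mem_H: "H \<in> A \<Longrightarrow> x \<in> H \<longleftrightarrow> nrm H \<bullet> x = 0"
  using nrm(2) by blast

definition side :: "'a set \<Rightarrow> 'a \<Rightarrow> bool" where
  "side H p \<longleftrightarrow> nrm H \<bullet> p > 0"

definition cell :: "'a \<Rightarrow> 'a set" where
  "cell p = {y. \<forall>H\<in>A. nrm H \<bullet> y \<noteq> 0 \<and> (side H y = side H p)}"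

lemma out_iff: "p \<in> - \<Union>A \<longleftrightarrow> (\<forall>H\<in>A. nrm H \<bullet> p \<noteq> 0)"
  using mem_H by auto

lemma cell_self: assumes "p \<in> - \<Union>A" shows "p \<in> cell p"
proof -
  have "\<forall>H\<in>A. nrm H \<bullet> p \<noteq> 0" using assms mem_H by blast
  then show ?thesis by (simp add: cell_def)
qed

lemma cell_sub: "cell p \<subseteq> - \<Union>A"
proof
  fix x assume "x \<in> cell p"
  then have "\<forall>H\<in>A. nrm H \<bullet> x \<noteq> 0" by (simp add: cell_def)
  then show "x \<in> - \<Union>A" using mem_H by blast
qed

lemma cell_eq: "q \<in> cell p \<Longrightarrow> cell q = cell p"
  by (auto simp: cell_def)

lemma convex_cell: "convex (cell p)"
proof -
  have "cell p = (\<Inter>H\<in>A. if side H p then {y. nrm H \<bullet> y > 0} else {y. nrm H \<bullet> y < 0})"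
  proof -
    have e: "(nrm H \<bullet> y \<noteq> 0 \<and> side H y = side H p) \<longleftrightarrow>
      y \<in> (if side H p then {y. nrm H \<bullet> y > 0} else {y. nrm H \<bullet> y < 0})" for H y
      by (auto simp: side_def)
    show ?thesis unfolding cell_def using e by blast
  qed
  also have "convex \<dots>"
    by (rule convex_INT) (auto intro: convex_halfspace_gt convex_halfspace_lt)
  finally show ?thesis .
qed

lemma comp_cell:
  assumes p: "p \<in> - \<Union>A"
  shows "connected_component_set (- \<Union>A) p = cell p"
proof
  show "cell p \<subseteq> connected_component_set (- \<Union>A) p"
    using connected_component_maximal[OF cell_self[OF p] convex_connected[OF convex_cell] cell_sub] .
next
  show "connected_component_set (- \<Union>A) p \<subseteq> cell p"
  proof
    fix y assume "y \<in> connected_component_set (- \<Union>A) p"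
    then obtain T where T: "connected T" "T \<subseteq> - \<Union>A" "p \<in> T" "y \<in> T"
      by (auto simp: connected_component_def)
    have "nrm H \<bullet> y \<noteq> 0 \<and> side H y = side H p" if H: "H \<in> A" for H
    proof -
      have y0: "nrm H \<bullet> y \<noteq> 0" and p0: "nrm H \<bullet> p \<noteq> 0" using T H out_iff by blast+
      have "T \<subseteq> - {z. nrm H \<bullet> z = 0}" using T(2) H mem_H by blast
      then have "connected_component (- {z. nrm H \<bullet> z = 0}) y p"
        using T by (meson connected_componentI)
      then show ?thesis using hyp_cc[OF nrm(1)[OF H] y0 p0] y0 by (auto simp: side_def)
    qed
    then show "y \<in> cell p" by (auto simp: cell_def)
  qed
qed

lemma chambers_eq: "chambers A = cell ` (- \<Union>A)"
  unfolding chambers_def components_def using comp_cell by auto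

lemma chamberE:
  assumes "c \<in> chambers A" obtains p where "p \<in> - \<Union>A" "c = cell p"
  using assms chambers_eq by auto

lemma sep_cell:
  assumes p: "p \<in> - \<Union>A" and q: "q \<in> - \<Union>A" and H: "H \<in> A"
  shows "separates H (cell p) (cell q) \<longleftrightarrow> side H p \<noteq> side H q"
proof -
  have "connected_component (- H) x y \<longleftrightarrow> side H x = side H y"
    if "x \<in> - \<Union>A" "y \<in> - \<Union>A" for x y
    using hyp_cc[OF nrm(1)[OF H], of x y] nrm(2)[OF H] that H out_iff
    by (auto simp: side_def)
  moreover have "side H x = side H p" if "x \<in> cell p" for x using that H by (auto simp: cell_def)
  moreover have "side H y = side H q" if "y \<in> cell q" for y using that H by (auto simp: cell_def)
  ultimately show ?thesis unfolding separates_def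
    using cell_self[OF p] cell_self[OF q] cell_sub by (metis (no_types, lifting) subsetD)
qed

lemma L1_cell:
  assumes p: "p \<in> - \<Union>A" and q: "q \<in> - \<Union>A"
  shows "L1 A (cell p) (cell q) = {H\<in>A. side H p \<noteq> side H q}"
  using sep_cell[OF p q] by (auto simp: L1_def)

lemma cell_eqI:
  assumes "\<And>H. H \<in> A \<Longrightarrow> side H p = side H q"
  shows "cell p = cell q"
  using assms by (auto simp: cell_def)

end

context arr begin

definition rep :: "'a set \<Rightarrow> 'a" where "rep c = (SOME p. p \<in> c)"

lemma rep: assumes "c \<in> chambers A" shows "rep c \<in> - \<Union>A" "c = cell (rep c)"
proof -
  obtain p where p: "p \<in> - \<Union>A" "c = cell p" using chamberE[OF assms] by blast
  then have "rep c \<in> c" unfolding rep_def using cell_self by (metis someI)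
  then show "rep c \<in> - \<Union>A" using p cell_sub by blast
  show "c = cell (rep c)" using p \<open>rep c \<in> c\<close> cell_eq by metis
qed

lemma L1_ch: assumes "c \<in> chambers A" "c' \<in> chambers A"
  shows "L1 A c c' = {H\<in>A. side H (rep c) \<noteq> side H (rep c')}"
  using L1_cell[OF rep(1)[OF assms(1)] rep(1)[OF assms(2)]] rep(2)[OF assms(1)] rep(2)[OF assms(2)]
  by simp

lemma ch_eqI: assumes "c \<in> chambers A" "c' \<in> chambers A"
  and "\<And>H. H \<in> A \<Longrightarrow> side H (rep c) = side H (rep c')"
  shows "c = c'"
  using cell_eqI[OF assms(3)] rep(2)[OF assms(1)] rep(2)[OF assms(2)] by metis

lemma part1:
  assumes "c0 \<in> chambers A" "c \<in> chambers A" "c' \<in> chambers A" "L1 A c0 c = L1 A c0 c'"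
  shows "c = c'"
proof (rule ch_eqI[OF assms(2,3)])
  fix H assume H: "H \<in> A"
  have "(H \<in> L1 A c0 c) = (H \<in> L1 A c0 c')" using assms(4) by simp
  then show "side H (rep c) = side H (rep c')" using H
    by (simp add: L1_ch[OF assms(1,2)] L1_ch[OF assms(1,3)]) blast
qed

lemma neg_cell: assumes "p \<in> - \<Union>A" shows "uminus ` cell p = cell (- p)"
proof -
  have p0: "\<forall>H\<in>A. nrm H \<bullet> p \<noteq> 0" using assms out_iff by blast
  have e: "(nrm H \<bullet> y \<noteq> 0 \<and> side H y = side H (-p)) \<longleftrightarrow> (nrm H \<bullet> (-y) \<noteq> 0 \<and> side H (-y) = side H p)"
    if "H \<in> A" for H y using p0 that by (auto simp: side_def)
  have "y \<in> cell (-p) \<longleftrightarrow> -y \<in> cell p" for y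
    unfolding cell_def using e by auto
  then show ?thesis by (auto simp: image_iff) (metis minus_minus)
qed

lemma neg_ch: assumes "c \<in> chambers A"
  shows "uminus ` c \<in> chambers A" "\<And>H. H \<in> A \<Longrightarrow> side H (rep (uminus ` c)) = (\<not> side H (rep c))"
proof -
  have r: "rep c \<in> - \<Union>A" "c = cell (rep c)" using rep[OF assms] by auto
  have m: "- rep c \<in> - \<Union>A" using r(1) out_iff by auto
  have e: "uminus ` c = cell (- rep c)" using neg_cell[OF r(1)] r(2) by metis
  show c: "uminus ` c \<in> chambers A" using e m chambers_eq by auto
  fix H assume H: "H \<in> A"
  have "rep (uminus ` c) \<in> cell (- rep c)" using rep(1)[OF c] rep(2)[OF c] e cell_self by metis
  then have "side H (rep (uminus ` c)) = side H (- rep c)" using H by (auto simp: cell_def)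
  also have "\<dots> = (\<not> side H (rep c))" using r(1) H out_iff by (auto simp: side_def)
  finally show "side H (rep (uminus ` c)) = (\<not> side H (rep c))" .
qed

end

locale arr0 = arr +
  fixes c0 assumes c0: "c0 \<in> chambers A"
begin

definition F :: "'a set \<Rightarrow> 'a set set" where "F c = L1 A c0 c"

lemma F_sub: "F c \<subseteq> A" by (auto simp: F_def L1_def)

lemma L1_F: assumes "c \<in> chambers A" "c' \<in> chambers A"
  shows "L1 A c c' = (F c - F c') \<union> (F c' - F c)"
  unfolding F_def using assms c0 by (auto simp: L1_ch)

lemma F_c0: "F c0 = {}" unfolding F_def using c0 by (auto simp: L1_ch)

lemma F_neg: "F (uminus ` c0) = A" unfolding F_def using c0 neg_ch[OF c0] by (auto simp: L1_ch)

lemma F_inj: "c \<in> chambers A \<Longrightarrow> c' \<in> chambers A \<Longrightarrow> F c = F c' \<Longrightarrow> c = c'"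
  using part1[OF c0] unfolding F_def by blast

lemma F_step:
  assumes "gallery A g" "Suc k < length g"
  shows "F (g ! Suc k) = (F (g ! k) - L1 A (g!k) (g!Suc k)) \<union> (L1 A (g!k) (g!Suc k) - F (g!k))"
    "card (L1 A (g!k) (g!Suc k)) = 1"
proof -
  have ch: "g ! k \<in> chambers A" "g ! Suc k \<in> chambers A" using assms by (auto simp: gallery_def)
  show "F (g ! Suc k) = (F (g ! k) - L1 A (g!k) (g!Suc k)) \<union> (L1 A (g!k) (g!Suc k) - F (g!k))"
    using L1_F[OF ch] by blast
  show "card (L1 A (g!k) (g!Suc k)) = 1" using assms by (auto simp: gallery_def)
qed

lemma card_F_step:
  assumes "gallery A g" "Suc k < length g"
  shows "card (F (g ! Suc k)) \<le> Suc (card (F (g ! k)))" "card (F (g ! k)) \<le> Suc (card (F (g ! Suc k)))"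
proof -
  obtain h where h: "L1 A (g!k) (g!Suc k) = {h}" using F_step(2)[OF assms] card_1_singletonE by blast
  have fin: "finite (F c)" for c using F_sub finA finite_subset by blast
  have "F (g ! Suc k) \<subseteq> insert h (F (g!k))" using F_step(1)[OF assms] h by auto
  then have "card (F (g ! Suc k)) \<le> card (insert h (F (g!k)))" by (intro card_mono) (use fin in auto)
  also have "\<dots> \<le> Suc (card (F (g!k)))" using fin by (simp add: card_insert_if)
  finally show "card (F (g ! Suc k)) \<le> Suc (card (F (g ! k)))" .
  have "F (g ! k) \<subseteq> insert h (F (g!Suc k))" using F_step(1)[OF assms] h by auto
  then have "card (F (g ! k)) \<le> card (insert h (F (g!Suc k)))" by (intro card_mono) (use fin in auto)
  also have "\<dots> \<le> Suc (card (F (g!Suc k)))" using fin by (simp add: card_insert_if)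
  finally show "card (F (g ! k)) \<le> Suc (card (F (g ! Suc k)))" .
qed

lemma card_F_gal:
  assumes "gallery A g" "hd g = c0" "k < length g"
  shows "card (F (g ! k)) \<le> k"
  using assms(3)
proof (induction k)
  case 0
  then show ?case using assms(1,2) F_c0 by (simp add: gallery_def hd_conv_nth)
next
  case (Suc k)
  then show ?case using card_F_step(1)[OF assms(1) Suc.prems] by simp
qed

lemma card_F_gal2:
  assumes "gallery A g" "k \<le> j" "j < length g"
  shows "card (F (g ! k)) + j \<ge> card (F (g ! j)) + k"
  using assms(2,3)
proof (induction j)
  case 0
  then show ?case by simp
next
  case (Suc j)
  show ?case
  proof (cases "k = Suc j")
    case True then show ?thesis by simp
  next
    case False
    then have "k \<le> j" using Suc.prems by simp
    then show ?thesis using Suc.IH Suc.prems card_F_step(1)[OF assms(1), of j] by simp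
  qed
qed

lemma gal_len:
  assumes "gallery_from_to A c0 (uminus ` c0) g"
  shows "card A + 1 \<le> length g"
proof -
  have g: "gallery A g" "hd g = c0" "last g = uminus ` c0" using assms by (auto simp: gallery_from_to_def)
  have "g \<noteq> []" using g by (auto simp: gallery_def)
  then have "last g = g ! (length g - 1)" "length g - 1 < length g" by (auto simp: last_conv_nth)
  then show ?thesis using card_F_gal[OF g(1,2), of "length g - 1"] g(3) F_neg by simp
qed

end

context arr0 begin

lemma open_c0: "open c0"
proof -
  have "closed H" if "H \<in> A" for H by (subst nrm(2)[OF that]) (rule closed_hyperplane)
  then have "closed (\<Union>A)" using finA by (auto intro!: closed_Union)
  then show ?thesis using c0 open_components unfolding chambers_def by blast
qed

lemma F_cell: assumes "p \<in> - \<Union>A" shows "F (cell p) = {H\<in>A. side H (rep c0) \<noteq> side H p}"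
proof -
  have "F (cell p) = L1 A (cell (rep c0)) (cell p)" unfolding F_def using rep(2)[OF c0] by metis
  then show ?thesis using L1_cell[OF rep(1)[OF c0] assms] by metis
qed

lemma gallery_abs:
  assumes idx: "bij_betw idx A {0..<card A}"
    and real: "\<And>k. k \<le> card A \<Longrightarrow> \<exists>c\<in>chambers A. F c = {H\<in>A. idx H < k}"
  shows "\<exists>g. gallery_from_to A c0 (uminus ` c0) g \<and> length g = card A + 1"
proof -
  obtain C where C: "\<And>k. k \<le> card A \<Longrightarrow> C k \<in> chambers A \<and> F (C k) = {H\<in>A. idx H < k}"
    using real by metis
  define g where "g = map C [0..<card A + 1]"
  have len: "length g = card A + 1" by (simp add: g_def)
  have gi: "i < length g \<Longrightarrow> g ! i = C i" for i by (simp add: g_def nth_append del: upt_Suc)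
  have step: "card (L1 A (g ! i) (g ! Suc i)) = 1" if "Suc i < length g" for i
  proof -
    have ch: "C i \<in> chambers A" "C (Suc i) \<in> chambers A" using C that len by auto
    have "L1 A (g ! i) (g ! Suc i) = {H\<in>A. idx H = i}"
      using L1_F[OF ch] C[of i] C[of "Suc i"] that len gi by auto
    also have "\<dots> = {inv_into A idx i}"
      using idx that len by (auto simp: bij_betw_def intro: inv_into_f_f[symmetric] f_inv_into_f inv_into_into)
    finally show ?thesis by simp
  qed
  have gal: "gallery A g"
    unfolding gallery_def using step C len by (auto simp: g_def)
  have "C 0 = c0" using F_inj[OF _ c0, of "C 0"] C[of 0] F_c0 by auto
  moreover have "g \<noteq> []" using len by auto
  ultimately have hd: "hd g = c0" using gi[of 0] by (simp add: hd_conv_nth)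
  have "F (C (card A)) = A" using C[of "card A"] idx by (auto simp: bij_betw_def)
  then have "C (card A) = uminus ` c0" using F_inj[OF _ neg_ch(1)[OF c0], of "C (card A)"] C[of "card A"] F_neg by auto
  then have "last g = uminus ` c0" by (simp add: g_def)
  then show ?thesis using gal hd len by (auto simp: gallery_from_to_def)
qed

lemma generic_w:
  defines "x \<equiv> rep c0"
  shows "\<exists>w\<in>c0. \<forall>H\<in>A. \<forall>H'\<in>A. H \<noteq> H' \<longrightarrow> (nrm H \<bullet> w) * (nrm H' \<bullet> x) \<noteq> (nrm H' \<bullet> w) * (nrm H \<bullet> x)"
proof -
  have x: "x \<in> - \<Union>A" using rep(1)[OF c0] by (simp add: x_def)
  have x0: "nrm H \<bullet> x \<noteq> 0" if "H \<in> A" for H using x that out_iff by blast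
  define b where "b H H' = (nrm H' \<bullet> x) *\<^sub>R nrm H - (nrm H \<bullet> x) *\<^sub>R nrm H'" for H H'
  have bv: "b H H' \<bullet> v = (nrm H \<bullet> v) * (nrm H' \<bullet> x) - (nrm H' \<bullet> v) * (nrm H \<bullet> x)" for H H' v
    by (simp add: b_def inner_diff_left algebra_simps)
  have bnz: "b H H' \<noteq> 0" if "H \<in> A" "H' \<in> A" "H \<noteq> H'" for H H'
  proof
    assume "b H H' = 0"
    then have e: "(nrm H \<bullet> y) * (nrm H' \<bullet> x) = (nrm H' \<bullet> y) * (nrm H \<bullet> x)" for y
      using bv[of H H' y] by simp
    have "y \<in> H \<longleftrightarrow> y \<in> H'" for y
      using e[of y] x0[OF that(1)] x0[OF that(2)] mem_H[OF that(1)] mem_H[OF that(2)] by auto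
    then show False using that by blast
  qed
  define bad where "bad = (\<Union>p\<in>{p\<in>A\<times>A. fst p \<noteq> snd p}. {v. b (fst p) (snd p) \<bullet> v = 0})"
  have ng: "negligible {v. b H H' \<bullet> v = 0}" if "H \<in> A" "H' \<in> A" "H \<noteq> H'" for H H'
    using bnz[OF that] negligible_hyperplane by blast
  have fin: "finite {p\<in>A\<times>A. fst p \<noteq> snd p}" using finA by (rule_tac finite_subset[of _ "A \<times> A"]) auto
  have "negligible bad" unfolding bad_def
  proof (rule negligible_Union)
    show "finite ((\<lambda>p. {v. b (fst p) (snd p) \<bullet> v = 0}) ` {p\<in>A\<times>A. fst p \<noteq> snd p})"
      using fin by blast
    show "negligible T" if T: "T \<in> (\<lambda>p. {v. b (fst p) (snd p) \<bullet> v = 0}) ` {p\<in>A\<times>A. fst p \<noteq> snd p}" for T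
    proof -
      obtain p where p: "p \<in> A \<times> A" "fst p \<noteq> snd p" "T = {v. b (fst p) (snd p) \<bullet> v = 0}"
        using T by blast
      have "fst p \<in> A" "snd p \<in> A" using p(1) by (auto simp: mem_Times_iff)
      then show ?thesis using p(3) ng[OF _ _ p(2)] by simp
    qed
  qed
  moreover have "\<not> negligible c0" using open_not_negligible[OF open_c0] rep(1)[OF c0] rep(2)[OF c0] cell_self
    by (metis empty_iff)
  ultimately obtain w where "w \<in> c0" "w \<notin> bad" using negligible_subset by (metis subsetI)
  then show ?thesis using bv unfolding bad_def by (rule_tac bexI[of _ w]) auto
qed

end

context arr0 begin

lemma exists_gallery: "\<exists>g. gallery_from_to A c0 (uminus ` c0) g \<and> length g = card A + 1"
proof -
  define x where "x = rep c0"
  have x: "x \<in> - \<Union>A" "c0 = cell x" using rep[OF c0] by (auto simp: x_def)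
  obtain w where w: "w \<in> c0" and gen: "\<And>H H'. H \<in> A \<Longrightarrow> H' \<in> A \<Longrightarrow> H \<noteq> H' \<Longrightarrow>
      (nrm H \<bullet> w) * (nrm H' \<bullet> x) \<noteq> (nrm H' \<bullet> w) * (nrm H \<bullet> x)"
    using generic_w unfolding x_def by blast
  have w0: "nrm H \<bullet> w \<noteq> 0" and wx: "(nrm H \<bullet> w > 0) = (nrm H \<bullet> x > 0)" and x0: "nrm H \<bullet> x \<noteq> 0"
    if "H \<in> A" for H
    using w x that out_iff by (auto simp: cell_def side_def)
  define t where "t H = (nrm H \<bullet> x) / (nrm H \<bullet> w)" for H
  have tpos: "t H > 0" if "H \<in> A" for H
    using w0[OF that] wx[OF that] x0[OF that] unfolding t_def
    by (cases "nrm H \<bullet> w > 0") (auto simp: divide_pos_pos divide_neg_neg)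
  have tinj: "inj_on t A"
  proof (rule inj_onI, rule ccontr)
    fix H H' assume H: "H \<in> A" "H' \<in> A" "t H = t H'" "H \<noteq> H'"
    then have "(nrm H \<bullet> x) * (nrm H' \<bullet> w) = (nrm H' \<bullet> x) * (nrm H \<bullet> w)"
      using w0[OF H(1)] w0[OF H(2)] unfolding t_def by (simp add: field_simps)
    then show False using gen[OF H(1,2,4)] by (simp add: algebra_simps)
  qed
  define \<gamma> where "\<gamma> s = x - s *\<^sub>R w" for s
  have flip: "\<gamma> s \<in> - \<Union>A \<and> F (cell (\<gamma> s)) = {H\<in>A. t H < s}" if s: "s \<notin> t ` A" for s
  proof -
    have e: "nrm H \<bullet> \<gamma> s = (nrm H \<bullet> w) * (t H - s)" if "H \<in> A" for H
      using w0[OF that] unfolding \<gamma>_def t_def by (simp add: inner_diff_right field_simps)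
    have ne: "t H - s \<noteq> 0" if "H \<in> A" for H using s that by auto
    have g0: "\<forall>H\<in>A. nrm H \<bullet> \<gamma> s \<noteq> 0" using e ne w0 by simp
    then have gA: "\<gamma> s \<in> - \<Union>A" using out_iff by blast
    have "(side H x \<noteq> side H (\<gamma> s)) = (t H < s)" if H: "H \<in> A" for H
    proof -
      have "side H (\<gamma> s) = ((nrm H \<bullet> w) * (t H - s) > 0)" using e[OF H] by (simp add: side_def)
      then show ?thesis using wx[OF H] w0[OF H] ne[OF H] unfolding side_def
        by (cases "nrm H \<bullet> w > 0") (auto simp: zero_less_mult_iff)
    qed
    moreover have "F (cell (\<gamma> s)) = {H\<in>A. side H x \<noteq> side H (\<gamma> s)}"
      using F_cell[OF gA] unfolding x_def .
    ultimately show ?thesis using gA by auto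
  qed
  define n where "n = card A"
  define ts where "ts = sorted_list_of_set (t ` A)"
  have fin: "finite (t ` A)" using finA by simp
  have ts: "sorted_wrt (<) ts" "set ts = t ` A" "length ts = n"
    using fin tinj by (simp_all add: ts_def n_def card_image)
  have dist: "distinct ts" using ts(1) strict_sorted_iff by blast
  have mono: "ts ! i \<le> ts ! j" if "i \<le> j" "j < n" for i j
    using sorted_wrt_nth_less[OF ts(1), of i j] that ts(3) by (cases "i = j") auto
  have smono: "ts ! i < ts ! j" if "i < j" "j < n" for i j
    using sorted_wrt_nth_less[OF ts(1), of i j] that ts(3) by auto
  have tspos: "ts ! i > 0" if "i < n" for i
  proof -
    have "ts ! i \<in> t ` A" using ts that nth_mem by metis
    then show ?thesis using tpos by auto
  qed
  define m where "m k = (if k = 0 then 0 else if k = n then ts ! (n - 1) + 1 else (ts ! (k - 1) + ts ! k) / 2)" for k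
  have m1: "ts ! i < m k" if "i < n" "i < k" "k \<le> n" for i k
  proof -
    have le: "ts ! i \<le> ts ! (k - 1)" using mono[of i "k - 1"] that by auto
    show ?thesis
    proof (cases "k = n")
      case True then show ?thesis using le that by (simp add: m_def)
    next
      case False
      then have "ts ! (k - 1) < ts ! k" using smono[of "k - 1" k] that by auto
      then show ?thesis using le that False by (simp add: m_def)
    qed
  qed
  have m2: "m k < ts ! i" if "i < n" "k \<le> i" for i k
  proof -
    have le: "ts ! k \<le> ts ! i" using mono[of k i] that by auto
    show ?thesis
    proof (cases "k = 0")
      case True then show ?thesis using tspos[of i] that by (simp add: m_def)
    next
      case False
      then have "ts ! (k - 1) < ts ! k" using smono[of "k - 1" k] that by auto
      then show ?thesis using le that False by (simp add: m_def)
    qed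
  qed
  define idx where "idx H = (THE i. i < n \<and> ts ! i = t H)" for H
  have idx: "idx H < n \<and> ts ! (idx H) = t H" if H: "H \<in> A" for H
  proof -
    have "t H \<in> set ts" using ts(2) H by auto
    then obtain i where i: "i < n" "ts ! i = t H" using ts(3) by (metis in_set_conv_nth)
    have "\<exists>!i. i < n \<and> ts ! i = t H"
    proof (rule ex1I[of _ i])
      show "i < n \<and> ts ! i = t H" using i by simp
      fix j assume "j < n \<and> ts ! j = t H"
      then show "j = i" using i dist ts(3) nth_eq_iff_index_eq[of ts j i] by auto
    qed
    then show ?thesis unfolding idx_def by (rule theI')
  qed
  have idx_uniq: "idx H = i" if "H \<in> A" "i < n" "ts ! i = t H" for H i
    using idx[OF that(1)] that dist ts(3) nth_eq_iff_index_eq by metis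
  have bij: "bij_betw idx A {0..<card A}"
    unfolding bij_betw_def
  proof
    show "inj_on idx A"
    proof (rule inj_onI)
      fix H H' assume "H \<in> A" "H' \<in> A" "idx H = idx H'"
      then have "t H = t H'" using idx by metis
      then show "H = H'" using tinj \<open>H \<in> A\<close> \<open>H' \<in> A\<close> inj_onD by metis
    qed
    show "idx ` A = {0..<card A}"
    proof
      show "idx ` A \<subseteq> {0..<card A}" using idx n_def by auto
      show "{0..<card A} \<subseteq> idx ` A"
      proof
        fix i assume "i \<in> {0..<card A}"
        then have i: "i < n" by (simp add: n_def)
        then have "ts ! i \<in> t ` A" using ts by (metis nth_mem)
        then obtain H where "H \<in> A" "ts ! i = t H" by blast
        then show "i \<in> idx ` A" using idx_uniq i by blast
      qed
    qed
  qed
  have real: "\<exists>c\<in>chambers A. F c = {H\<in>A. idx H < k}" if k: "k \<le> card A" for k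
  proof -
    have mt: "m k \<notin> t ` A"
    proof
      assume "m k \<in> t ` A"
      then obtain H where H: "H \<in> A" "m k = t H" by blast
      then show False using idx[OF H(1)] m1[of "idx H" k] m2[of "idx H" k] k n_def
        by (cases "idx H < k") auto
    qed
    have "t H < m k \<longleftrightarrow> idx H < k" if H: "H \<in> A" for H
    proof (cases "idx H < k")
      case True
      then have "ts ! idx H < m k" using idx[OF H] m1[of "idx H" k] k n_def by blast
      then show ?thesis using True idx[OF H] by simp
    next
      case False
      then have "m k < ts ! idx H" using idx[OF H] m2[of "idx H" k] by simp
      then show ?thesis using False idx[OF H] by simp
    qed
    then have "{H\<in>A. t H < m k} = {H\<in>A. idx H < k}" by blast
    moreover have "cell (\<gamma> (m k)) \<in> chambers A" unfolding chambers_eq using flip[OF mt] by blast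
    ultimately show ?thesis using flip[OF mt] by (intro bexI[of _ "cell (\<gamma> (m k))"]) auto
  qed
  show ?thesis using gallery_abs[OF bij real] .
qed

end

context arr0 begin

definition hh :: "'a set list \<Rightarrow> nat \<Rightarrow> 'a set" where
  "hh r k = the_elem (L1 A (r ! k) (r ! Suc k))"

definition pos :: "'a set list \<Rightarrow> 'a set \<Rightarrow> nat" where
  "pos r H = inv_into {0..<card A} (hh r) H"

lemma mg_len: assumes "minimal_gallery A c0 (uminus ` c0) r" shows "length r = card A + 1"
proof -
  obtain g where "gallery_from_to A c0 (uminus ` c0) g" "length g = card A + 1" using exists_gallery by blast
  then have "length r \<le> card A + 1" using assms by (auto simp: minimal_gallery_def)
  moreover have "card A + 1 \<le> length r" using gal_len assms by (auto simp: minimal_gallery_def)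
  ultimately show ?thesis by simp
qed

lemma mg_basic:
  assumes "minimal_gallery A c0 (uminus ` c0) r"
  shows "gallery A r" "hd r = c0" "last r = uminus ` c0" "r ! card A = uminus ` c0"
    "k \<le> card A \<Longrightarrow> r ! k \<in> chambers A"
proof -
  show g: "gallery A r" "hd r = c0" "last r = uminus ` c0"
    using assms by (auto simp: minimal_gallery_def gallery_from_to_def)
  have "r \<noteq> []" using g by (auto simp: gallery_def)
  then show "r ! card A = uminus ` c0" using g mg_len[OF assms] by (simp add: last_conv_nth)
  show "k \<le> card A \<Longrightarrow> r ! k \<in> chambers A" using g(1) mg_len[OF assms]
    by (auto simp: gallery_def)
qed

lemma mg_card:
  assumes "minimal_gallery A c0 (uminus ` c0) r" "k \<le> card A"
  shows "card (F (r ! k)) = k"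
proof -
  have "card (F (r ! k)) \<le> k" using card_F_gal[OF mg_basic(1,2)[OF assms(1)]] assms mg_len by simp
  moreover have "card (F (r ! k)) + card A \<ge> card (F (r ! card A)) + k"
    using card_F_gal2[OF mg_basic(1)[OF assms(1)] assms(2)] mg_len[OF assms(1)] by simp
  moreover have "F (r ! card A) = A" using mg_basic(4)[OF assms(1)] F_neg by simp
  ultimately show ?thesis by simp
qed

lemma mg_step:
  assumes "minimal_gallery A c0 (uminus ` c0) r" "k < card A"
  shows "L1 A (r ! k) (r ! Suc k) = {hh r k}" "hh r k \<in> A" "hh r k \<notin> F (r ! k)"
    "F (r ! Suc k) = insert (hh r k) (F (r ! k))"
proof -
  have sk: "Suc k < length r" using mg_len[OF assms(1)] assms(2) by simp
  obtain h where h: "L1 A (r!k) (r!Suc k) = {h}" using F_step(2)[OF mg_basic(1)[OF assms(1)] sk] card_1_singletonE by blast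
  then show L: "L1 A (r ! k) (r ! Suc k) = {hh r k}" by (simp add: hh_def)
  then show "hh r k \<in> A" by (auto simp: L1_def)
  have e: "F (r ! Suc k) = (F (r!k) - {hh r k}) \<union> ({hh r k} - F (r!k))"
    using F_step(1)[OF mg_basic(1)[OF assms(1)] sk] L by simp
  have fin: "finite (F c)" for c using F_sub finA finite_subset by blast
  have c1: "card (F (r ! Suc k)) = Suc k" using mg_card[OF assms(1)] assms(2) by simp
  have c2: "card (F (r ! k)) = k" using mg_card[OF assms(1)] assms(2) by simp
  show n: "hh r k \<notin> F (r ! k)"
  proof
    assume "hh r k \<in> F (r ! k)"
    then have "F (r ! Suc k) \<subseteq> F (r ! k)" using e by auto
    then have "card (F (r ! Suc k)) \<le> card (F (r ! k))" using fin by (simp add: card_mono)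
    then show False using c1 c2 by simp
  qed
  then show "F (r ! Suc k) = insert (hh r k) (F (r ! k))" using e by auto
qed

lemma mg_F:
  assumes "minimal_gallery A c0 (uminus ` c0) r" "k \<le> card A"
  shows "F (r ! k) = hh r ` {0..<k}"
  using assms(2)
proof (induction k)
  case 0
  then show ?case using mg_basic(2)[OF assms(1)] mg_basic(1)[OF assms(1)] F_c0
    by (simp add: gallery_def hd_conv_nth)
next
  case (Suc k)
  then show ?case using mg_step(4)[OF assms(1), of k] by (simp add: atLeast0_lessThan_Suc)
qed

lemma mg_bij:
  assumes "minimal_gallery A c0 (uminus ` c0) r"
  shows "bij_betw (hh r) {0..<card A} A"
proof -
  have im: "hh r ` {0..<card A} = A" using mg_F[OF assms order_refl] mg_basic(4)[OF assms] F_neg by simp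
  then have "card (hh r ` {0..<card A}) = card {0..<card A}" by simp
  then have "inj_on (hh r) {0..<card A}" using inj_on_iff_eq_card by blast
  then show ?thesis using im by (simp add: bij_betw_def)
qed

lemma pos:
  assumes "minimal_gallery A c0 (uminus ` c0) r" "H \<in> A"
  shows "pos r H < card A" "hh r (pos r H) = H"
proof -
  have b: "bij_betw (hh r) {0..<card A} A" using mg_bij[OF assms(1)] .
  have m: "H \<in> hh r ` {0..<card A}" using b assms(2) by (simp add: bij_betw_def)
  have "pos r H \<in> {0..<card A}" unfolding pos_def using m by (rule inv_into_into)
  then show "pos r H < card A" by simp
  show "hh r (pos r H) = H" unfolding pos_def using m by (rule f_inv_into_f)
qed

lemma pos_hh:
  assumes "minimal_gallery A c0 (uminus ` c0) r" "i < card A"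
  shows "pos r (hh r i) = i"
  unfolding pos_def using mg_bij[OF assms(1)] assms(2)
  by (simp add: bij_betw_def inv_into_f_f)

lemma pos_inj:
  assumes "minimal_gallery A c0 (uminus ` c0) r" "H \<in> A" "H' \<in> A" "pos r H = pos r H'"
  shows "H = H'"
  using pos(2)[OF assms(1,2)] pos(2)[OF assms(1,3)] assms(4) by metis

lemma F_pos:
  assumes "minimal_gallery A c0 (uminus ` c0) r" "k \<le> card A"
  shows "F (r ! k) = {H\<in>A. pos r H < k}"
proof -
  have "H \<in> hh r ` {0..<k} \<longleftrightarrow> H \<in> A \<and> pos r H < k" for H
  proof
    assume "H \<in> hh r ` {0..<k}"
    then obtain i where i: "i < k" "H = hh r i" by auto
    then have "i < card A" using assms(2) by simp
    then show "H \<in> A \<and> pos r H < k" using i mg_step(2)[OF assms(1)] pos_hh[OF assms(1)] by auto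
  next
    assume "H \<in> A \<and> pos r H < k"
    then have "pos r H \<in> {0..<k}" "H = hh r (pos r H)" using pos[OF assms(1)] by auto
    then show "H \<in> hh r ` {0..<k}" by blast
  qed
  then show ?thesis using mg_F[OF assms] by blast
qed

lemma cross_at:
  assumes "minimal_gallery A c0 (uminus ` c0) r"
  shows "crosses_at A r H i \<longleftrightarrow> i < card A \<and> H = hh r i"
  using mg_step(1)[OF assms] mg_len[OF assms] by (auto simp: crosses_at_def)

lemma cross_before:
  assumes "minimal_gallery A c0 (uminus ` c0) r" "H \<in> A" "H' \<in> A"
  shows "crosses_before A r H H' \<longleftrightarrow> pos r H < pos r H'"
proof
  assume "crosses_before A r H H'"
  then obtain i j where "i < j" "i < card A" "j < card A" "H = hh r i" "H' = hh r j"
    by (auto simp: crosses_before_def cross_at[OF assms(1)])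
  then show "pos r H < pos r H'" using pos_hh[OF assms(1)] by simp
next
  assume "pos r H < pos r H'"
  then show "crosses_before A r H H'" unfolding crosses_before_def cross_at[OF assms(1)]
    using pos[OF assms(1,2)] pos[OF assms(1,3)]
    by (intro exI[of _ "pos r H"] exI[of _ "pos r H'"]) simp
qed

lemma realize_first:
  assumes "minimal_gallery A c0 (uminus ` c0) r" "S \<subseteq> A" "H \<in> S"
    "\<And>H'. H' \<in> S \<Longrightarrow> H' \<noteq> H \<Longrightarrow> pos r H < pos r H'"
  shows "\<exists>c\<in>chambers A. F c \<inter> S = {H}"
proof -
  have HA: "H \<in> A" using assms by auto
  have k: "Suc (pos r H) \<le> card A" using pos(1)[OF assms(1) HA] by simp
  have "F (r ! Suc (pos r H)) \<inter> S = {H}"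
  proof -
    have "H' \<in> S \<and> pos r H' < Suc (pos r H) \<longleftrightarrow> H' = H" if "H' \<in> A" for H'
      using assms(3) assms(4)[of H'] pos_inj[OF assms(1) that HA] by (cases "H' = H") auto
    then show ?thesis using F_pos[OF assms(1) k] assms(2,3) by auto
  qed
  then show ?thesis using mg_basic(5)[OF assms(1) k] by blast
qed

lemma realize_last:
  assumes "minimal_gallery A c0 (uminus ` c0) r" "S \<subseteq> A" "H \<in> S"
    "\<And>H'. H' \<in> S \<Longrightarrow> H' \<noteq> H \<Longrightarrow> pos r H' < pos r H"
  shows "\<exists>c\<in>chambers A. F c \<inter> S = S - {H}"
proof -
  have HA: "H \<in> A" using assms by auto
  have k: "pos r H \<le> card A" using pos(1)[OF assms(1) HA] by simp
  have "F (r ! pos r H) \<inter> S = S - {H}"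
  proof -
    have "H' \<in> S \<and> pos r H' < pos r H \<longleftrightarrow> H' \<in> S \<and> H' \<noteq> H" if "H' \<in> A" for H'
      using assms(4)[of H'] by auto
    then show ?thesis using F_pos[OF assms(1) k] assms(2,3) by auto
  qed
  then show ?thesis using mg_basic(5)[OF assms(1) k] by blast
qed

end

lemma AR:
  fixes U1 U2 P1 P2 Q1 Q2 S1 S2 :: real
  assumes "U1 \<noteq> 0" "U2 \<noteq> 0" "U1 + U2 \<noteq> 0"
    "P1 \<noteq> 0" "P2 \<noteq> 0" "P1 + P2 \<noteq> 0"
    "Q1 \<noteq> 0" "Q2 \<noteq> 0" "Q1 + Q2 \<noteq> 0"
    "S1 \<noteq> 0" "S2 \<noteq> 0" "S1 + S2 \<noteq> 0"
  and R1: "((U1>0) \<noteq> (P1>0)) \<noteq> ((U2>0) \<noteq> (P2>0)) \<and> ((U2>0) \<noteq> (P2>0)) = ((U1+U2>0) \<noteq> (P1+P2>0))"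
  and R2: "((U2>0) \<noteq> (Q2>0)) \<noteq> ((U1>0) \<noteq> (Q1>0)) \<and> ((U1>0) \<noteq> (Q1>0)) = ((U1+U2>0) \<noteq> (Q1+Q2>0))"
  and R3: "((U1+U2>0) \<noteq> (S1+S2>0)) \<noteq> ((U1>0) \<noteq> (S1>0)) \<and> ((U1>0) \<noteq> (S1>0)) = ((U2>0) \<noteq> (S2>0))"
  shows False
  using assms by smt

context arr0 begin

lemma subH: assumes "H \<in> A" shows "subspace H"
  by (subst nrm(2)[OF assms]) (rule subspace_hyperplane)

lemma dimH: assumes "H \<in> A" shows "dim H = DIM('a) - 1"
proof -
  have "dim {x. nrm H \<bullet> x = 0} = DIM('a) - 1" using dim_hyperplane[OF nrm(1)[OF assms]] .
  moreover have "dim H = dim {x. nrm H \<bullet> x = 0}" using nrm(2)[OF assms] by (rule arg_cong)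
  ultimately show ?thesis by simp
qed

lemma dim_int_le:
  assumes "H \<in> A" "H' \<in> A" "H \<noteq> H'"
  shows "dim (H \<inter> H') + 2 \<le> DIM('a)"
proof -
  have s1: "subspace H" by (rule subH[OF assms(1)])
  have s2: "subspace H'" by (rule subH[OF assms(2)])
  have s3: "subspace (H \<inter> H')" by (rule subspace_inter[OF s1 s2])
  have d1: "dim H = DIM('a) - 1" by (rule dimH[OF assms(1)])
  have d2: "dim H' = DIM('a) - 1" by (rule dimH[OF assms(2)])
  have "dim (H \<inter> H') < dim H"
  proof (rule ccontr)
    assume "\<not> dim (H \<inter> H') < dim H"
    then have le: "dim H \<le> dim (H \<inter> H')" by simp
    have "H \<inter> H' \<subseteq> H" by blast
    then have "H \<inter> H' = H" using le by (rule subspace_dim_equal[OF s3 s1])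
    then have sub: "H \<subseteq> H'" by blast
    have "dim H' \<le> dim H" using d1 d2 by simp
    with sub have "H = H'" by (rule subspace_dim_equal[OF s1 s2])
    then show False using assms(3) by simp
  qed
  moreover have "DIM('a) \<ge> 1" using DIM_positive[where 'a='a] by linarith
  ultimately show ?thesis using d1 by linarith
qed

lemma dim_int_ge:
  assumes "H \<in> A" "H' \<in> A"
  shows "DIM('a) \<le> dim (H \<inter> H') + 2"
proof -
  have e: "dim {x + y |x y. x \<in> H \<and> y \<in> H'} + dim (H \<inter> H') = dim H + dim H'"
    by (rule dim_sums_Int[OF subH[OF assms(1)] subH[OF assms(2)]])
  have "dim {x + y |x y. x \<in> H \<and> y \<in> H'} \<le> DIM('a)" by (rule dim_subset_UNIV)
  moreover have "dim H = DIM('a) - 1" by (rule dimH[OF assms(1)])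
  moreover have "dim H' = DIM('a) - 1" by (rule dimH[OF assms(2)])
  ultimately show ?thesis using e by linarith
qed

lemma L2_pair:
  assumes "H \<in> A" "H' \<in> A" "H \<noteq> H'"
  shows "H \<inter> H' \<in> L2 A"
proof -
  have "dim (H \<inter> H') + 2 = DIM('a)" using dim_int_le[OF assms] dim_int_ge[OF assms(1,2)] by linarith
  moreover have "{H, H'} \<subseteq> A \<and> {H, H'} \<noteq> {} \<and> H \<inter> H' = \<Inter>{H, H'}" using assms by simp
  ultimately show ?thesis unfolding L2_def by blast
qed

lemma L2_pencil:
  assumes X: "X \<in> L2 A" and H: "H1 \<in> A" "H2 \<in> A" "H1 \<noteq> H2" and sub: "X \<subseteq> H1" "X \<subseteq> H2"
  shows "X = H1 \<inter> H2"
proof -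
  obtain S where S: "S \<subseteq> A" "X = \<Inter>S" and d: "dim X + 2 = DIM('a)" using X by (auto simp: L2_def)
  have "\<forall>s\<in>S. subspace s" using S(1) subH by blast
  then have "subspace (\<Inter>S)" by (rule subspace_Inter)
  then have sX: "subspace X" using S(2) by simp
  have s12: "subspace (H1 \<inter> H2)" by (rule subspace_inter[OF subH[OF H(1)] subH[OF H(2)]])
  have le: "dim (H1 \<inter> H2) \<le> dim X" using dim_int_le[OF H] d by linarith
  have "X \<subseteq> H1 \<inter> H2" using sub by blast
  then show ?thesis using le by (rule subspace_dim_equal[OF sX s12])
qed

end

context arr0 begin

lemma pencil_coef:
  assumes H: "H1 \<in> A" "H2 \<in> A" "H3 \<in> A" "H1 \<noteq> H2" "H1 \<noteq> H3" "H2 \<noteq> H3"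
    and sub: "H1 \<inter> H2 \<subseteq> H3"
  shows "\<exists>u v. u \<noteq> 0 \<and> v \<noteq> 0 \<and> nrm H3 = u *\<^sub>R nrm H1 + v *\<^sub>R nrm H2"
proof -
  obtain y z where y: "y \<in> span {nrm H1, nrm H2}" and z: "\<And>w. w \<in> span {nrm H1, nrm H2} \<Longrightarrow> orthogonal z w"
    and e: "nrm H3 = y + z"
    using orthogonal_subspace_decomp_exists[of "{nrm H1, nrm H2}" "nrm H3"] by blast
  have "nrm H1 \<in> span {nrm H1, nrm H2}" "nrm H2 \<in> span {nrm H1, nrm H2}" by (simp_all add: span_base)
  then have "orthogonal z (nrm H1)" "orthogonal z (nrm H2)" using z by blast+
  then have z12: "nrm H1 \<bullet> z = 0" "nrm H2 \<bullet> z = 0" by (simp_all add: orthogonal_def inner_commute)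
  have "z \<in> H1" using z12(1) mem_H[OF H(1)] by simp
  moreover have "z \<in> H2" using z12(2) mem_H[OF H(2)] by simp
  ultimately have "z \<in> H3" using sub by blast
  then have a3z: "nrm H3 \<bullet> z = 0" using mem_H[OF H(3)] by simp
  have "orthogonal z y" using z[OF y] .
  then have yz: "y \<bullet> z = 0" by (simp add: orthogonal_def inner_commute)
  have "nrm H3 \<bullet> z = y \<bullet> z + z \<bullet> z" using e by (simp add: inner_add_left)
  then have "z \<bullet> z = 0" using a3z yz by simp
  then have "z = 0" by simp
  then have "nrm H3 \<in> span {nrm H1, nrm H2}" using e y by simp
  then obtain u v where uv: "nrm H3 = u *\<^sub>R nrm H1 + v *\<^sub>R nrm H2"
    by (auto simp: span_insert span_singleton) (metis add.commute diff_add_cancel)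
  have inn: "nrm H3 \<bullet> p = u * (nrm H1 \<bullet> p) + v * (nrm H2 \<bullet> p)" for p
    using uv by (simp add: inner_add_left)
  have n3: "nrm H3 \<noteq> 0" by (rule nrm(1)[OF H(3)])
  have "u \<noteq> 0"
  proof
    assume u: "u = 0"
    then have v: "v \<noteq> 0" using uv n3 by auto
    have "p \<in> H3 \<longleftrightarrow> p \<in> H2" for p
      using mem_H[OF H(3), of p] mem_H[OF H(2), of p] inn[of p] u v by simp
    then have "H3 = H2" by blast
    then show False using H by simp
  qed
  moreover have "v \<noteq> 0"
  proof
    assume v: "v = 0"
    then have u: "u \<noteq> 0" using uv n3 by auto
    have "p \<in> H3 \<longleftrightarrow> p \<in> H1" for p
      using mem_H[OF H(3), of p] mem_H[OF H(1), of p] inn[of p] u v by simp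
    then have "H3 = H1" by blast
    then show False using H by simp
  qed
  ultimately show ?thesis using uv by blast
qed

definition fl :: "'a set \<Rightarrow> 'a \<Rightarrow> bool" where
  "fl H p \<longleftrightarrow> side H (rep c0) \<noteq> side H p"

definition Rz :: "'a set set \<Rightarrow> 'a set \<Rightarrow> bool" where
  "Rz S H \<longleftrightarrow> (\<exists>c\<in>chambers A. F c \<inter> S = {H} \<or> F c \<inter> S = S - {H})"

lemma Rz_point:
  assumes "Rz {H1, H2, H3} H1" "H1 \<noteq> H2" "H1 \<noteq> H3" "H2 \<noteq> H3" "H1 \<in> A" "H2 \<in> A" "H3 \<in> A"
  shows "\<exists>p. p \<in> - \<Union>A \<and> fl H1 p \<noteq> fl H2 p \<and> fl H2 p = fl H3 p"
proof -
  obtain c where c: "c \<in> chambers A" "F c \<inter> {H1,H2,H3} = {H1} \<or> F c \<inter> {H1,H2,H3} = {H1,H2,H3} - {H1}"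
    using assms(1) by (auto simp: Rz_def)
  obtain p where p: "p \<in> - \<Union>A" "c = cell p" using chamberE[OF c(1)] by blast
  have Fc: "H \<in> F c \<longleftrightarrow> fl H p" if "H \<in> A" for H using F_cell[OF p(1)] p(2) that by (auto simp: fl_def)
  have "fl H1 p \<noteq> fl H2 p \<and> fl H2 p = fl H3 p"
    using c(2) Fc[OF assms(5)] Fc[OF assms(6)] Fc[OF assms(7)] assms(2-4) by blast
  then show ?thesis using p(1) by blast
qed

lemma G:
  assumes H: "H1 \<in> A" "H2 \<in> A" "H3 \<in> A" "H1 \<noteq> H2" "H1 \<noteq> H3" "H2 \<noteq> H3"
    and sub: "H1 \<inter> H2 \<subseteq> H3"
    and R: "Rz {H1,H2,H3} H1" "Rz {H1,H2,H3} H2" "Rz {H1,H2,H3} H3"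
  shows False
proof -
  obtain u v where uv: "u \<noteq> 0" "v \<noteq> 0" "nrm H3 = u *\<^sub>R nrm H1 + v *\<^sub>R nrm H2"
    using pencil_coef[OF H sub] by blast
  define x where "x = rep c0"
  have x: "x \<in> - \<Union>A" using rep(1)[OF c0] by (simp add: x_def)
  define P1 where "P1 q = u * (nrm H1 \<bullet> q)" for q
  define P2 where "P2 q = v * (nrm H2 \<bullet> q)" for q
  have inn: "nrm H3 \<bullet> q = P1 q + P2 q" for q
    using uv(3) by (simp add: inner_add_left P1_def P2_def)
  have nz: "P1 q \<noteq> 0 \<and> P2 q \<noteq> 0 \<and> P1 q + P2 q \<noteq> 0" if "q \<in> - \<Union>A" for q
    using that out_iff H uv inn[of q] unfolding P1_def P2_def by auto
  have f1: "fl H1 q = ((P1 x > 0) \<noteq> (P1 q > 0))" if "q \<in> - \<Union>A" for q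
  proof -
    have "nrm H1 \<bullet> q \<noteq> 0" "nrm H1 \<bullet> x \<noteq> 0" using that x out_iff H by auto
    then show ?thesis unfolding fl_def side_def P1_def x_def[symmetric] using uv(1)
      by (cases "u > 0") (auto simp: zero_less_mult_iff)
  qed
  have f2: "fl H2 q = ((P2 x > 0) \<noteq> (P2 q > 0))" if "q \<in> - \<Union>A" for q
  proof -
    have "nrm H2 \<bullet> q \<noteq> 0" "nrm H2 \<bullet> x \<noteq> 0" using that x out_iff H by auto
    then show ?thesis unfolding fl_def side_def P2_def x_def[symmetric] using uv(2)
      by (cases "v > 0") (auto simp: zero_less_mult_iff)
  qed
  have f3: "fl H3 q = ((P1 x + P2 x > 0) \<noteq> (P1 q + P2 q > 0))" for q
    unfolding fl_def side_def x_def[symmetric] inn by simp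
  have s1: "{H1,H2,H3} = {H2,H1,H3}" "{H1,H2,H3} = {H3,H1,H2}" by auto
  obtain p where p: "p \<in> - \<Union>A" "fl H1 p \<noteq> fl H2 p \<and> fl H2 p = fl H3 p"
    using Rz_point[OF R(1) H(4-6) H(1-3)] by blast
  obtain q where q: "q \<in> - \<Union>A" "fl H2 q \<noteq> fl H1 q \<and> fl H1 q = fl H3 q"
    using Rz_point[of H2 H1 H3] R(2) s1(1) H by auto
  obtain s where s: "s \<in> - \<Union>A" "fl H3 s \<noteq> fl H1 s \<and> fl H1 s = fl H2 s"
    using Rz_point[of H3 H1 H2] R(3) s1(2) H by auto
  show False
    using AR[of "P1 x" "P2 x" "P1 p" "P2 p" "P1 q" "P2 q" "P1 s" "P2 s"]
      nz[OF x] nz[OF p(1)] nz[OF q(1)] nz[OF s(1)] p(2) q(2) s(2)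
      f1[OF p(1)] f1[OF q(1)] f1[OF s(1)] f2[OF p(1)] f2[OF q(1)] f2[OF s(1)] f3[of p] f3[of q] f3[of s]
    by argo
qed

end

lemma comb2:
  assumes "x12 \<and> x23 \<longrightarrow> x13" "\<not>x12 \<and> \<not>x23 \<longrightarrow> \<not>x13"
    "y12 \<and> y23 \<longrightarrow> y13" "\<not>y12 \<and> \<not>y23 \<longrightarrow> \<not>y13"
  and "x12 \<and> x13 \<longrightarrow> R1" "\<not>x12 \<and> \<not>x13 \<longrightarrow> R1"
  and "\<not>x12 \<and> x23 \<longrightarrow> R2" "x12 \<and> \<not>x23 \<longrightarrow> R2"
  and "\<not>x13 \<and> \<not>x23 \<longrightarrow> R3" "x13 \<and> x23 \<longrightarrow> R3"
  and "y12 \<and> y13 \<longrightarrow> R1" "\<not>y12 \<and> \<not>y13 \<longrightarrow> R1"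
  and "\<not>y12 \<and> y23 \<longrightarrow> R2" "y12 \<and> \<not>y23 \<longrightarrow> R2"
  and "\<not>y13 \<and> \<not>y23 \<longrightarrow> R3" "y13 \<and> y23 \<longrightarrow> R3"
  and "\<not> (R1 \<and> R2 \<and> R3)"
  shows "(x12 = y12) = (x13 = y13)"
  using assms by argo

lemma comb:
  fixes a1 a2 a3 b1 b2 b3 :: nat
  assumes d: "a1 \<noteq> a2" "a1 \<noteq> a3" "a2 \<noteq> a3" "b1 \<noteq> b2" "b1 \<noteq> b3" "b2 \<noteq> b3"
  and "a1 < a2 \<and> a1 < a3 \<longrightarrow> R1" "a2 < a1 \<and> a3 < a1 \<longrightarrow> R1"
  and "a2 < a1 \<and> a2 < a3 \<longrightarrow> R2" "a1 < a2 \<and> a3 < a2 \<longrightarrow> R2"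
  and "a3 < a1 \<and> a3 < a2 \<longrightarrow> R3" "a1 < a3 \<and> a2 < a3 \<longrightarrow> R3"
  and "b1 < b2 \<and> b1 < b3 \<longrightarrow> R1" "b2 < b1 \<and> b3 < b1 \<longrightarrow> R1"
  and "b2 < b1 \<and> b2 < b3 \<longrightarrow> R2" "b1 < b2 \<and> b3 < b2 \<longrightarrow> R2"
  and "b3 < b1 \<and> b3 < b2 \<longrightarrow> R3" "b1 < b3 \<and> b2 < b3 \<longrightarrow> R3"
  and "\<not> (R1 \<and> R2 \<and> R3)"
  shows "((a1 < a2) = (b1 < b2)) = ((a1 < a3) = (b1 < b3))"
proof (rule comb2[of "a1 < a2" "a2 < a3" "a1 < a3" "b1 < b2" "b2 < b3" "b1 < b3" R1 R2 R3])
  have e: "a2 < a1 \<longleftrightarrow> \<not> a1 < a2" "a3 < a1 \<longleftrightarrow> \<not> a1 < a3" "a3 < a2 \<longleftrightarrow> \<not> a2 < a3"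
     "b2 < b1 \<longleftrightarrow> \<not> b1 < b2" "b3 < b1 \<longleftrightarrow> \<not> b1 < b3" "b3 < b2 \<longleftrightarrow> \<not> b2 < b3" using d by auto
  show "a1 < a2 \<and> a2 < a3 \<longrightarrow> a1 < a3" "\<not> a1 < a2 \<and> \<not> a2 < a3 \<longrightarrow> \<not> a1 < a3"
    "b1 < b2 \<and> b2 < b3 \<longrightarrow> b1 < b3" "\<not> b1 < b2 \<and> \<not> b2 < b3 \<longrightarrow> \<not> b1 < b3" using d by auto
  show "a1 < a2 \<and> a1 < a3 \<longrightarrow> R1" "\<not> a1 < a2 \<and> \<not> a1 < a3 \<longrightarrow> R1"
    "\<not> a1 < a2 \<and> a2 < a3 \<longrightarrow> R2" "a1 < a2 \<and> \<not> a2 < a3 \<longrightarrow> R2"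
    "\<not> a1 < a3 \<and> \<not> a2 < a3 \<longrightarrow> R3" "a1 < a3 \<and> a2 < a3 \<longrightarrow> R3"
    "b1 < b2 \<and> b1 < b3 \<longrightarrow> R1" "\<not> b1 < b2 \<and> \<not> b1 < b3 \<longrightarrow> R1"
    "\<not> b1 < b2 \<and> b2 < b3 \<longrightarrow> R2" "b1 < b2 \<and> \<not> b2 < b3 \<longrightarrow> R2"
    "\<not> b1 < b3 \<and> \<not> b2 < b3 \<longrightarrow> R3" "b1 < b3 \<and> b2 < b3 \<longrightarrow> R3"
    using assms(7-18) unfolding e by auto
  show "\<not> (R1 \<and> R2 \<and> R3)" by (rule assms(19))
qed

context arr0 begin

lemma Rz_first:
  assumes "minimal_gallery A c0 (uminus ` c0) g" "S \<subseteq> A" "H \<in> S"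
    "\<And>H'. H' \<in> S \<Longrightarrow> H' \<noteq> H \<Longrightarrow> pos g H < pos g H'"
  shows "Rz S H"
  using realize_first[OF assms] unfolding Rz_def by blast

lemma Rz_last:
  assumes "minimal_gallery A c0 (uminus ` c0) g" "S \<subseteq> A" "H \<in> S"
    "\<And>H'. H' \<in> S \<Longrightarrow> H' \<noteq> H \<Longrightarrow> pos g H' < pos g H"
  shows "Rz S H"
  using realize_last[OF assms] unfolding Rz_def by blast

definition agr :: "'a set list \<Rightarrow> 'a set list \<Rightarrow> 'a set \<Rightarrow> 'a set \<Rightarrow> bool" where
  "agr r s H K \<longleftrightarrow> ((pos r H < pos r K) = (pos s H < pos s K))"

lemma triple:
  assumes r: "minimal_gallery A c0 (uminus ` c0) r" and s: "minimal_gallery A c0 (uminus ` c0) s"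
    and H: "H1 \<in> A" "H2 \<in> A" "H3 \<in> A" "H1 \<noteq> H2" "H1 \<noteq> H3" "H2 \<noteq> H3"
    and sub: "H1 \<inter> H2 \<subseteq> H3"
  shows "agr r s H1 H2 = agr r s H1 H3"
proof -
  let ?S = "{H1, H2, H3}"
  have SA: "?S \<subseteq> A" using H by simp
  have d: "pos g Hi \<noteq> pos g Hj" if "g = r \<or> g = s" "Hi \<in> A" "Hj \<in> A" "Hi \<noteq> Hj" for g Hi Hj
    using that pos_inj[OF r] pos_inj[OF s] by blast
  have fr: "Rz ?S Hj" if "g = r \<or> g = s" "Hj \<in> ?S" "\<And>H'. H' \<in> ?S \<Longrightarrow> H' \<noteq> Hj \<Longrightarrow> pos g Hj < pos g H'" for g Hj
    using that Rz_first[OF r SA, of Hj] Rz_first[OF s SA, of Hj] by blast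
  have la: "Rz ?S Hj" if "g = r \<or> g = s" "Hj \<in> ?S" "\<And>H'. H' \<in> ?S \<Longrightarrow> H' \<noteq> Hj \<Longrightarrow> pos g H' < pos g Hj" for g Hj
    using that Rz_last[OF r SA, of Hj] Rz_last[OF s SA, of Hj] by blast
  have F1: "pos g Ha < pos g Hb \<and> pos g Ha < pos g Hc \<longrightarrow> Rz ?S Ha"
    if "g = r \<or> g = s" "{Ha, Hb, Hc} = ?S" for g Ha Hb Hc
  proof
    assume a: "pos g Ha < pos g Hb \<and> pos g Ha < pos g Hc"
    show "Rz ?S Ha"
    proof (rule fr[OF that(1)])
      show "Ha \<in> ?S" using that(2) by blast
      fix H' assume "H' \<in> ?S" "H' \<noteq> Ha"
      then have "H' = Hb \<or> H' = Hc" using that(2) by blast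
      then show "pos g Ha < pos g H'" using a by blast
    qed
  qed
  have L1: "pos g Hb < pos g Ha \<and> pos g Hc < pos g Ha \<longrightarrow> Rz ?S Ha"
    if "g = r \<or> g = s" "{Ha, Hb, Hc} = ?S" for g Ha Hb Hc
  proof
    assume a: "pos g Hb < pos g Ha \<and> pos g Hc < pos g Ha"
    show "Rz ?S Ha"
    proof (rule la[OF that(1)])
      show "Ha \<in> ?S" using that(2) by blast
      fix H' assume "H' \<in> ?S" "H' \<noteq> Ha"
      then have "H' = Hb \<or> H' = Hc" using that(2) by blast
      then show "pos g H' < pos g Ha" using a by blast
    qed
  qed
  have e1: "{H2, H1, H3} = ?S" and e2: "{H3, H1, H2} = ?S" by auto
  have gr: "r = r \<or> r = s" and gs: "s = r \<or> s = s" by simp_all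
  note insts = F1[OF gr refl] F1[OF gr e1] F1[OF gr e2] L1[OF gr refl] L1[OF gr e1] L1[OF gr e2]
    F1[OF gs refl] F1[OF gs e1] F1[OF gs e2] L1[OF gs refl] L1[OF gs e1] L1[OF gs e2]
  have nG: "\<not> (Rz ?S H1 \<and> Rz ?S H2 \<and> Rz ?S H3)" using G[OF H sub] by blast
  show ?thesis unfolding agr_def
  proof (rule comb[of "pos r H1" "pos r H2" "pos r H3" "pos s H1" "pos s H2" "pos s H3" "Rz ?S H1" "Rz ?S H2" "Rz ?S H3"])
    show "pos r H1 \<noteq> pos r H2" "pos r H1 \<noteq> pos r H3" "pos r H2 \<noteq> pos r H3"
      "pos s H1 \<noteq> pos s H2" "pos s H1 \<noteq> pos s H3" "pos s H2 \<noteq> pos s H3"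
      using d H by blast+
    show "\<not> (Rz ?S H1 \<and> Rz ?S H2 \<and> Rz ?S H3)" by (rule nG)
  qed (fact insts)+
qed

lemma agr_sym:
  assumes r: "minimal_gallery A c0 (uminus ` c0) r" and s: "minimal_gallery A c0 (uminus ` c0) s"
    and "H \<in> A" "K \<in> A" "H \<noteq> K"
  shows "agr r s H K = agr r s K H"
proof -
  have "pos r H \<noteq> pos r K" "pos s H \<noteq> pos s K" using assms pos_inj by blast+
  then show ?thesis unfolding agr_def by auto
qed

lemma triple_X:
  assumes r: "minimal_gallery A c0 (uminus ` c0) r" and s: "minimal_gallery A c0 (uminus ` c0) s"
    and X: "X \<in> L2 A" and H: "H \<in> A" "K \<in> A" "L \<in> A" "H \<noteq> K" "H \<noteq> L" "K \<noteq> L"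
    and sub: "X \<subseteq> H" "X \<subseteq> K" "X \<subseteq> L"
  shows "agr r s H K = agr r s H L"
proof -
  have "X = H \<inter> K" using L2_pencil[OF X H(1,2,4) sub(1,2)] .
  then have "H \<inter> K \<subseteq> L" using sub(3) by simp
  then show ?thesis using triple[OF r s H] by blast
qed

lemma share:
  assumes r: "minimal_gallery A c0 (uminus ` c0) r" and s: "minimal_gallery A c0 (uminus ` c0) s"
    and X: "X \<in> L2 A" and H: "c \<in> A" "Q \<in> A" "R \<in> A" "c \<noteq> Q" "c \<noteq> R"
    and sub: "X \<subseteq> c" "X \<subseteq> Q" "X \<subseteq> R"
  shows "agr r s c Q = agr r s c R"
proof (cases "Q = R")
  case True then show ?thesis by simp
next
  case False
  show ?thesis by (rule triple_X[OF r s X H(1-5) False sub])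
qed

lemma chain:
  assumes r: "minimal_gallery A c0 (uminus ` c0) r" and s: "minimal_gallery A c0 (uminus ` c0) s"
    and X: "X \<in> L2 A" and H: "H \<in> A" "H' \<in> A" "K \<in> A" "K' \<in> A" "H \<noteq> H'" "K \<noteq> K'"
    and sub: "X \<subseteq> H" "X \<subseteq> H'" "X \<subseteq> K" "X \<subseteq> K'"
  shows "agr r s H H' = agr r s K K'"
proof -
  have sh: "agr r s c Q = agr r s c R" if "c \<in> {H,H',K,K'}" "Q \<in> {H,H',K,K'}" "R \<in> {H,H',K,K'}" "c \<noteq> Q" "c \<noteq> R" for c Q R
    using share[OF r s X, of c Q R] that H sub by blast
  have sy: "agr r s c Q = agr r s Q c" if "c \<in> {H,H',K,K'}" "Q \<in> {H,H',K,K'}" "c \<noteq> Q" for c Q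
    using agr_sym[OF r s, of c Q] that H by blast
  show ?thesis
  proof (cases "H = K")
    case True
    then show ?thesis using sh[of H H' K'] H by auto
  next
    case HK: False
    show ?thesis
    proof (cases "H = K'")
      case True
      then have "agr r s H H' = agr r s H K" using sh[of H H' K] H by auto
      also have "\<dots> = agr r s K K'" using sy[of H K] sy[of K K'] True H by auto
      finally show ?thesis .
    next
      case HK': False
      have "agr r s H H' = agr r s H K" using sh[of H H' K] H HK by auto
      also have "\<dots> = agr r s K H" using sy[of H K] HK by auto
      also have "\<dots> = agr r s K K'" using sh[of K H K'] H HK HK' by auto
      finally show ?thesis .
    qed
  qed
qed

lemma diff_iff:
  assumes r0: "minimal_gallery A c0 (uminus ` c0) r0" and r: "minimal_gallery A c0 (uminus ` c0) r"
    and H: "H \<in> A" "H' \<in> A" "H \<noteq> H'"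
  shows "H \<inter> H' \<in> L2_diff A r0 r \<longleftrightarrow> \<not> agr r0 r H H'"
proof -
  let ?X = "H \<inter> H'"
  have X: "?X \<in> L2 A" using L2_pair[OF H] .
  have d0: "pos r0 H \<noteq> pos r0 H'" "pos r H \<noteq> pos r H'" using pos_inj[OF r0] pos_inj[OF r] H by blast+
  show ?thesis
  proof
    assume "?X \<in> L2_diff A r0 r"
    then obtain K K' where K: "K \<in> A" "K' \<in> A" "?X \<subseteq> K" "?X \<subseteq> K'"
      "crosses_before A r0 K K'" "crosses_before A r K' K"
      by (auto simp: L2_diff_def)
    then have p: "pos r0 K < pos r0 K'" "pos r K' < pos r K"
      using cross_before[OF r0 K(1,2)] cross_before[OF r K(2,1)] by auto
    then have KK: "K \<noteq> K'" by auto
    have "\<not> agr r0 r K K'" using p by (auto simp: agr_def)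
    moreover have "agr r0 r H H' = agr r0 r K K'"
      using chain[OF r0 r X H(1,2) K(1,2) H(3) KK] K(3,4) by blast
    ultimately show "\<not> agr r0 r H H'" by simp
  next
    assume na: "\<not> agr r0 r H H'"
    show "?X \<in> L2_diff A r0 r"
    proof (cases "pos r0 H < pos r0 H'")
      case True
      then have "pos r H' < pos r H" using na d0 by (auto simp: agr_def)
      then have "crosses_before A r0 H H'" "crosses_before A r H' H"
        using True cross_before[OF r0 H(1,2)] cross_before[OF r H(2,1)] by auto
      then show ?thesis using X H unfolding L2_diff_def by blast
    next
      case False
      then have a: "pos r0 H' < pos r0 H" using d0 by auto
      then have "pos r H < pos r H'" using na d0 by (auto simp: agr_def)
      then have "crosses_before A r0 H' H" "crosses_before A r H H'"
        using a cross_before[OF r0 H(2,1)] cross_before[OF r H(1,2)] by auto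
      then show ?thesis using X H unfolding L2_diff_def by blast
    qed
  qed
qed

lemma pos_card:
  assumes r: "minimal_gallery A c0 (uminus ` c0) r" and H: "H \<in> A"
  shows "pos r H = card {K\<in>A. pos r K < pos r H}"
proof -
  have k: "pos r H \<le> card A" using pos(1)[OF r H] by simp
  show ?thesis using F_pos[OF r k] mg_card[OF r k] by simp
qed

lemma part2:
  assumes r0: "minimal_gallery A c0 (uminus ` c0) r0" and r: "minimal_gallery A c0 (uminus ` c0) r"
    and s: "minimal_gallery A c0 (uminus ` c0) s" and eq: "L2_diff A r0 r = L2_diff A r0 s"
  shows "r = s"
proof -
  have ord: "(pos r H < pos r H') = (pos s H < pos s H')" if H: "H \<in> A" "H' \<in> A" "H \<noteq> H'" for H H'
  proof -
    have "agr r0 r H H' = agr r0 s H H'" using diff_iff[OF r0 r H] diff_iff[OF r0 s H] eq by simp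
    then show ?thesis unfolding agr_def by blast
  qed
  have pe: "pos r H = pos s H" if H: "H \<in> A" for H
  proof -
    have "K \<in> A \<and> pos r K < pos r H \<longleftrightarrow> K \<in> A \<and> pos s K < pos s H" for K
      using ord[OF _ H, of K] by (cases "K = H") auto
    then have "{K\<in>A. pos r K < pos r H} = {K\<in>A. pos s K < pos s H}" by blast
    then show ?thesis using pos_card[OF r H] pos_card[OF s H] by simp
  qed
  have Fe: "F (r ! k) = F (s ! k)" if "k \<le> card A" for k
    using F_pos[OF r that] F_pos[OF s that] pe by auto
  have "r ! k = s ! k" if "k < length r" for k
  proof -
    have k: "k \<le> card A" using that mg_len[OF r] by simp
    show ?thesis using F_inj[OF mg_basic(5)[OF r k] mg_basic(5)[OF s k] Fe[OF k]] .
  qed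
  moreover have "length r = length s" using mg_len[OF r] mg_len[OF s] by simp
  ultimately show ?thesis by (simp add: nth_equalityI)
qed

end

theorem proposition2p3:
  fixes A :: "'a::euclidean_space set set" and c0 :: "'a set" and r0 :: "'a set list"
  assumes "central_essential_arrangement A"
    and "c0 \<in> chambers A"
  shows "(\<forall>c\<in>chambers A. \<forall>c'\<in>chambers A. L1 A c0 c = L1 A c0 c' \<longrightarrow> c = c') \<and>
         (minimal_gallery A c0 (uminus ` c0) r0 \<longrightarrow>
           (\<forall>r r'. minimal_gallery A c0 (uminus ` c0) r \<and> minimal_gallery A c0 (uminus ` c0) r'
              \<and> L2_diff A r0 r = L2_diff A r0 r' \<longrightarrow> r = r'))"
proof -
  have fin: "finite A" and hyp: "\<And>H. H \<in> A \<Longrightarrow> linear_hyperplane H"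
    using assms(1) by (auto simp: central_essential_arrangement_def)
  interpret arr0 A c0
    by unfold_locales (use fin hyp assms(2) in auto)
  show ?thesis
    using part1[OF assms(2)] part2 by blast
qed

end
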